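(* Let $G=(V,E)$ be an undirected graph having a strongly connected orientation. A strongly connected orientation of $G$ is decreasingly minimal among the strongly connected orientations of $G$ if and only if it is increasingly maximal among them.
   Context: An orientation's in-degree vector is $(\varrho_D(v))_{v\in V}$, $\varrho_D(v)$ the number of arcs with head $v$. Decreasingly minimal: largest in-degree as small as possible within the class, then second largest, etc. Increasingly maximal: smallest in-degree as large as possible within the class, then second smallest, etc. *)

theory Defs
  imports Main "HOL-Library.Multiset"
begin

text \<open>An undirected (multi)graph is given by a finite vertex set V, a finite
edge set E and an endpoint map ep; edge e joins fst (ep e) and snd (ep e).
Parallel edges are allowed (distinct edges may have the same endpoints).\<close>

definition ugraph :: "'v set \<Rightarrow> 'e set \<Rightarrow> ('e \<Rightarrow> 'v \<times> 'v) \<Rightarrow> bool" where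
  "ugraph V E ep \<longleftrightarrow> finite V \<and> finite E \<and>
     (\<forall>e\<in>E. fst (ep e) \<in> V \<and> snd (ep e) \<in> V)"

text \<open>An orientation assigns to every edge a (tail, head) pair, which is
one of the two orderings of its endpoints.\<close>

definition is_orientation :: "'e set \<Rightarrow> ('e \<Rightarrow> 'v \<times> 'v) \<Rightarrow> ('e \<Rightarrow> 'v \<times> 'v) \<Rightarrow> bool" where
  "is_orientation E ep D \<longleftrightarrow> (\<forall>e\<in>E. D e = ep e \<or> D e = prod.swap (ep e))"

definition arcs :: "'e set \<Rightarrow> ('e \<Rightarrow> 'v \<times> 'v) \<Rightarrow> ('v \<times> 'v) set" where
  "arcs E D = D ` E"

definition strongly_connected :: "'v set \<Rightarrow> 'e set \<Rightarrow> ('e \<Rightarrow> 'v \<times> 'v) \<Rightarrow> bool" where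
  "strongly_connected V E D \<longleftrightarrow> (\<forall>u\<in>V. \<forall>v\<in>V. (u, v) \<in> (arcs E D)\<^sup>*)"

definition strong_orientations ::
  "'v set \<Rightarrow> 'e set \<Rightarrow> ('e \<Rightarrow> 'v \<times> 'v) \<Rightarrow> ('e \<Rightarrow> 'v \<times> 'v) set" where
  "strong_orientations V E ep = {D. is_orientation E ep D \<and> strongly_connected V E D}"

definition indeg :: "'e set \<Rightarrow> ('e \<Rightarrow> 'v \<times> 'v) \<Rightarrow> 'v \<Rightarrow> nat" where
  "indeg E D v = card {e \<in> E. snd (D e) = v}"

definition indeg_inc :: "'v set \<Rightarrow> 'e set \<Rightarrow> ('e \<Rightarrow> 'v \<times> 'v) \<Rightarrow> nat list" where
  "indeg_inc V E D = sorted_list_of_multiset (image_mset (indeg E D) (mset_set V))"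

definition indeg_dec :: "'v set \<Rightarrow> 'e set \<Rightarrow> ('e \<Rightarrow> 'v \<times> 'v) \<Rightarrow> nat list" where
  "indeg_dec V E D = rev (indeg_inc V E D)"

definition lex_le :: "nat list \<Rightarrow> nat list \<Rightarrow> bool" where
  "lex_le xs ys \<longleftrightarrow> xs = ys \<or> (xs, ys) \<in> lexord {(a, b). a < b}"

definition dec_min :: "'v set \<Rightarrow> 'e set \<Rightarrow> ('e \<Rightarrow> 'v \<times> 'v) set \<Rightarrow> ('e \<Rightarrow> 'v \<times> 'v) \<Rightarrow> bool" where
  "dec_min V E C D \<longleftrightarrow> D \<in> C \<and> (\<forall>D'\<in>C. lex_le (indeg_dec V E D) (indeg_dec V E D'))"

definition inc_max :: "'v set \<Rightarrow> 'e set \<Rightarrow> ('e \<Rightarrow> 'v \<times> 'v) set \<Rightarrow> ('e \<Rightarrow> 'v \<times> 'v) \<Rightarrow> bool" where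
  "inc_max V E C D \<longleftrightarrow> D \<in> C \<and> (\<forall>D'\<in>C. lex_le (indeg_inc V E D') (indeg_inc V E D))"

end

theory Submission
  imports Defs
begin


abbreviation LT :: "(nat \<times> nat) set" where "LT \<equiv> {(a, b). a < b}"

lemma trans_LT: "trans LT" by (auto simp: trans_def)

lemma lex_le_trans: "lex_le a b \<Longrightarrow> lex_le b c \<Longrightarrow> lex_le a c"
  unfolding lex_le_def using lexord_transI[OF trans_LT] by (auto dest: transD)

lemma lex_strict_contra: "(a, b) \<in> lexord LT \<Longrightarrow> lex_le b a \<Longrightarrow> False"
proof -
  assume 1: "(a, b) \<in> lexord LT" and 2: "lex_le b a"
  have irr: "\<And>xs. (xs, xs) \<notin> lexord LT" by (rule lexord_irreflexive) auto
  from 2 show False unfolding lex_le_def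
  proof
    assume "b = a" thus False using 1 irr by auto
  next
    assume "(b, a) \<in> lexord LT"
    with 1 have "(a, a) \<in> lexord LT" using lexord_transI[OF trans_LT] by (auto dest: transD)
    thus False using irr by auto
  qed
qed

lemma sort_app:
  assumes "\<forall>x\<in>#A. \<forall>y\<in>#B. x \<le> (y::nat)"
  shows "sorted_list_of_multiset (A + B) = sorted_list_of_multiset A @ sorted_list_of_multiset B"
proof -
  let ?xs = "sorted_list_of_multiset A @ sorted_list_of_multiset B"
  have s: "sorted ?xs" using assms by (simp add: sorted_append)
  have m: "mset ?xs = A + B" by simp
  have "sorted_list_of_multiset (A + B) = sorted_list_of_multiset (mset ?xs)" by (simp only: m)
  also have "\<dots> = ?xs" by (metis s sorted_list_of_multiset_mset sorted_sort_id)
  finally show ?thesis .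
qed

lemma nonempty_list_head:
  assumes "K \<noteq> {#}" shows "\<exists>c rest. sorted_list_of_multiset K = c # rest \<and> c \<in># K"
proof (cases "sorted_list_of_multiset K")
  case Nil
  then have "mset (sorted_list_of_multiset K) = {#}" by simp
  then show ?thesis using assms by simp
next
  case (Cons c rest)
  have "c \<in># K" using Cons set_sorted_list_of_multiset[of K] by (metis list.set_intros(1))
  then show ?thesis using Cons by simp
qed

lemma nonempty_rev_head:
  assumes "K \<noteq> {#}" shows "\<exists>c rest. rev (sorted_list_of_multiset K) = c # rest \<and> c \<in># K"
proof (cases "rev (sorted_list_of_multiset K)")
  case Nil
  then have "mset (sorted_list_of_multiset K) = {#}" by simp
  then show ?thesis using assms by simp
next
  case (Cons c rest)
  have "c \<in># K" using Cons set_sorted_list_of_multiset[of K] by (metis list.set_intros(1) set_rev)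
  then show ?thesis using Cons by simp
qed

lemma step_inc:
  assumes "(a::nat) + 2 \<le> b"
  shows "(sorted_list_of_multiset (N + {#a, b#}), sorted_list_of_multiset (N + {#a + 1, b - 1#})) \<in> lexord LT"
proof -
  define Nlo where "Nlo = filter_mset (\<lambda>z. z \<le> a) N"
  define Nhi where "Nhi = filter_mset (\<lambda>z. \<not> z \<le> a) N"
  have N: "N = Nlo + Nhi" unfolding Nlo_def Nhi_def by (rule multiset_partition)
  have e1: "N + {#a, b#} = (Nlo + {#a#}) + (Nhi + {#b#})" using N by simp
  have e2: "N + {#a + 1, b - 1#} = Nlo + (Nhi + {#a + 1, b - 1#})" using N by simp
  have s1: "sorted_list_of_multiset (N + {#a, b#}) =
      (sorted_list_of_multiset Nlo @ [a]) @ sorted_list_of_multiset (Nhi + {#b#})"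
    unfolding e1
    apply (subst sort_app)
     using assms apply (auto simp: Nlo_def Nhi_def)[1]
    apply (subst sort_app)
     apply (auto simp: Nlo_def)
    done
  have s2: "sorted_list_of_multiset (N + {#a + 1, b - 1#}) =
      sorted_list_of_multiset Nlo @ sorted_list_of_multiset (Nhi + {#a + 1, b - 1#})"
    unfolding e2
    apply (subst sort_app)
     using assms apply (auto simp: Nlo_def Nhi_def)
    done
  obtain c rest where cr: "sorted_list_of_multiset (Nhi + {#a + 1, b - 1#}) = c # rest"
    and cin: "c \<in># Nhi + {#a + 1, b - 1#}"
    using nonempty_list_head[of "Nhi + {#a + 1, b - 1#}"] by auto
  have "a < c" using cin assms by (auto simp: Nhi_def)
  then show ?thesis unfolding s1 s2 cr by (simp add: lexord_append_leftI)
qed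

lemma step_dec:
  assumes "(a::nat) + 2 \<le> b"
  shows "(rev (sorted_list_of_multiset (N + {#a + 1, b - 1#})), rev (sorted_list_of_multiset (N + {#a, b#}))) \<in> lexord LT"
proof -
  define Nlo where "Nlo = filter_mset (\<lambda>z. z < b) N"
  define Nhi where "Nhi = filter_mset (\<lambda>z. \<not> z < b) N"
  have N: "N = Nlo + Nhi" unfolding Nlo_def Nhi_def by (rule multiset_partition)
  have e1: "N + {#a, b#} = (Nlo + {#a#}) + ({#b#} + Nhi)" using N by simp
  have e2: "N + {#a + 1, b - 1#} = (Nlo + {#a + 1, b - 1#}) + Nhi" using N by simp
  have s1: "sorted_list_of_multiset (N + {#a, b#}) =
      sorted_list_of_multiset (Nlo + {#a#}) @ ([b] @ sorted_list_of_multiset Nhi)"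
  proof -
    have h: "sorted_list_of_multiset ({#b#} + Nhi) = [b] @ sorted_list_of_multiset Nhi"
      by (subst sort_app) (auto simp: Nhi_def)
    show ?thesis unfolding e1 h[symmetric]
      by (rule sort_app) (use assms in \<open>auto simp: Nlo_def Nhi_def\<close>)
  qed
  have s2: "sorted_list_of_multiset (N + {#a + 1, b - 1#}) =
      sorted_list_of_multiset (Nlo + {#a + 1, b - 1#}) @ sorted_list_of_multiset Nhi"
    unfolding e2
    apply (subst sort_app)
     using assms apply (auto simp: Nlo_def Nhi_def)
    done
  obtain c rest where cr: "rev (sorted_list_of_multiset (Nlo + {#a + 1, b - 1#})) = c # rest"
    and cin: "c \<in># Nlo + {#a + 1, b - 1#}"
    using nonempty_rev_head[of "Nlo + {#a + 1, b - 1#}"] by auto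
  have "c < b" using cin assms by (auto simp: Nlo_def)
  have r1: "rev (sorted_list_of_multiset (N + {#a + 1, b - 1#})) = rev (sorted_list_of_multiset Nhi) @ (c # rest)"
    by (simp only: s2 rev_append cr)
  have r2: "rev (sorted_list_of_multiset (N + {#a, b#})) = rev (sorted_list_of_multiset Nhi) @ (b # rev (sorted_list_of_multiset (Nlo + {#a#})))"
    by (simp only: s1 rev_append append_assoc) simp
  show ?thesis unfolding r1 r2 by (rule lexord_append_leftI) (use \<open>c < b\<close> in simp)
qed

lemma mset_decomp:
  assumes "finite V" "u \<in> V" "v \<in> V" "u \<noteq> v"
  shows "image_mset f (mset_set V) = image_mset f (mset_set (V - {u, v})) + {#f u, f v#}"
proof -
  have V: "V = insert u (insert v (V - {u, v}))" using assms by auto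
  have "mset_set V = add_mset u (add_mset v (mset_set (V - {u, v})))"
    by (subst V) (use assms in simp)
  then show ?thesis by simp
qed

lemma move_setup:
  fixes f g :: "'v \<Rightarrow> nat"
  assumes "finite V" "u \<in> V" "v \<in> V" "u \<noteq> v"
    and "\<forall>w\<in>V. w \<noteq> u \<longrightarrow> w \<noteq> v \<longrightarrow> g w = f w"
    and "g u = f u + 1" "g v + 1 = f v"
  shows "image_mset f (mset_set V) = image_mset f (mset_set (V - {u, v})) + {#f u, f v#}"
    and "image_mset g (mset_set V) = image_mset f (mset_set (V - {u, v})) + {#f u + 1, f v - 1#}"
proof -
  show "image_mset f (mset_set V) = image_mset f (mset_set (V - {u, v})) + {#f u, f v#}"
    by (rule mset_decomp) (use assms in auto)
  have "image_mset g (mset_set (V - {u, v})) = image_mset f (mset_set (V - {u, v}))"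
    by (rule image_mset_cong) (use assms in auto)
  moreover have "image_mset g (mset_set V) = image_mset g (mset_set (V - {u, v})) + {#g u, g v#}"
    by (rule mset_decomp) (use assms in auto)
  ultimately show "image_mset g (mset_set V) = image_mset f (mset_set (V - {u, v})) + {#f u + 1, f v - 1#}"
    using assms by simp
qed

lemma move_strict:
  fixes f g :: "'v \<Rightarrow> nat"
  assumes "finite V" "u \<in> V" "v \<in> V" "u \<noteq> v"
    and "\<forall>w\<in>V. w \<noteq> u \<longrightarrow> w \<noteq> v \<longrightarrow> g w = f w"
    and "g u = f u + 1" "g v + 1 = f v" "f u + 2 \<le> f v"
  shows "(rev (sorted_list_of_multiset (image_mset g (mset_set V))), rev (sorted_list_of_multiset (image_mset f (mset_set V)))) \<in> lexord LT"
    and "(sorted_list_of_multiset (image_mset f (mset_set V)), sorted_list_of_multiset (image_mset g (mset_set V))) \<in> lexord LT"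
  using move_setup[OF assms(1-7)] step_dec[OF assms(8)] step_inc[OF assms(8)] by simp_all

lemma move_le:
  fixes f g :: "'v \<Rightarrow> nat"
  assumes "finite V" "u \<in> V" "v \<in> V" "u \<noteq> v"
    and "\<forall>w\<in>V. w \<noteq> u \<longrightarrow> w \<noteq> v \<longrightarrow> g w = f w"
    and "g u = f u + 1" "g v + 1 = f v" "f u + 1 \<le> f v"
  shows "lex_le (rev (sorted_list_of_multiset (image_mset g (mset_set V)))) (rev (sorted_list_of_multiset (image_mset f (mset_set V))))"
    and "lex_le (sorted_list_of_multiset (image_mset f (mset_set V))) (sorted_list_of_multiset (image_mset g (mset_set V)))"
proof -
  have "(lex_le (rev (sorted_list_of_multiset (image_mset g (mset_set V)))) (rev (sorted_list_of_multiset (image_mset f (mset_set V)))))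
    \<and> lex_le (sorted_list_of_multiset (image_mset f (mset_set V))) (sorted_list_of_multiset (image_mset g (mset_set V)))"
  proof (cases "f u + 2 \<le> f v")
    case True
    then show ?thesis using move_strict[OF assms(1-7) True] unfolding lex_le_def by blast
  next
    case False
    then have "f v = f u + 1" using assms(8) by simp
    then have "image_mset g (mset_set V) = image_mset f (mset_set V)"
      using move_setup[OF assms(1-7)] by (simp add: add_mset_commute)
    then show ?thesis unfolding lex_le_def by simp
  qed
  then show "lex_le (rev (sorted_list_of_multiset (image_mset g (mset_set V)))) (rev (sorted_list_of_multiset (image_mset f (mset_set V))))"
    and "lex_le (sorted_list_of_multiset (image_mset f (mset_set V))) (sorted_list_of_multiset (image_mset g (mset_set V)))"
    by blast+
qed



lemma ends_V:
  assumes "ugraph V E ep" "is_orientation E ep D" "e \<in> E"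
  shows "fst (D e) \<in> V" "snd (D e) \<in> V"
  using assms unfolding ugraph_def is_orientation_def by (auto simp: prod.swap_def)

definition rho :: "'e set \<Rightarrow> ('e \<Rightarrow> 'v \<times> 'v) \<Rightarrow> 'v set \<Rightarrow> nat" where
  "rho E D Z = card {e\<in>E. snd (D e) \<in> Z \<and> fst (D e) \<notin> Z}"

lemma cut_lemma:
  assumes "(a, b) \<in> r\<^sup>*" "a \<notin> Z" "b \<in> Z"
  shows "\<exists>c d. (c, d) \<in> r \<and> c \<notin> Z \<and> d \<in> Z"
  using assms
proof (induction rule: rtrancl_induct)
  case base then show ?case by simp
next
  case (step c d) then show ?case by (cases "c \<in> Z") auto
qed

lemma strong_iff:
  assumes G: "ugraph V E ep" and O: "is_orientation E ep D"
  shows "strongly_connected V E D \<longleftrightarrow> (\<forall>Z. Z \<subseteq> V \<longrightarrow> Z \<noteq> {} \<longrightarrow> Z \<noteq> V \<longrightarrow> 1 \<le> rho E D Z)"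
proof
  have fE: "finite E" using G unfolding ugraph_def by simp
  assume S: "strongly_connected V E D"
  show "\<forall>Z. Z \<subseteq> V \<longrightarrow> Z \<noteq> {} \<longrightarrow> Z \<noteq> V \<longrightarrow> 1 \<le> rho E D Z"
  proof (intro allI impI)
    fix Z assume Z: "Z \<subseteq> V" "Z \<noteq> {}" "Z \<noteq> V"
    obtain z where z: "z \<in> Z" using Z by auto
    obtain w where w: "w \<in> V" "w \<notin> Z" using Z by auto
    have "(w, z) \<in> (arcs E D)\<^sup>*" using S z w Z unfolding strongly_connected_def by auto
    then obtain c d where "(c, d) \<in> arcs E D" "c \<notin> Z" "d \<in> Z" using cut_lemma w z by metis
    then obtain e where e: "e \<in> E" "D e = (c, d)" unfolding arcs_def by auto
    then have "e \<in> {e\<in>E. snd (D e) \<in> Z \<and> fst (D e) \<notin> Z}" using \<open>c \<notin> Z\<close> \<open>d \<in> Z\<close> by auto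
    then have "{e\<in>E. snd (D e) \<in> Z \<and> fst (D e) \<notin> Z} \<noteq> {}" by auto
    then show "1 \<le> rho E D Z" unfolding rho_def using fE
      by (simp add: Suc_le_eq card_gt_0_iff)
  qed
next
  assume C: "\<forall>Z. Z \<subseteq> V \<longrightarrow> Z \<noteq> {} \<longrightarrow> Z \<noteq> V \<longrightarrow> 1 \<le> rho E D Z"
  show "strongly_connected V E D" unfolding strongly_connected_def
  proof (intro ballI)
    fix u v assume u: "u \<in> V" and v: "v \<in> V"
    show "(u, v) \<in> (arcs E D)\<^sup>*"
    proof (rule ccontr)
      assume nv: "(u, v) \<notin> (arcs E D)\<^sup>*"
      define Z where "Z = {w\<in>V. (u, w) \<notin> (arcs E D)\<^sup>*}"
      have "Z \<subseteq> V" "Z \<noteq> {}" "Z \<noteq> V" using u v nv unfolding Z_def by auto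
      then have "1 \<le> rho E D Z" using C by blast
      then have "{e\<in>E. snd (D e) \<in> Z \<and> fst (D e) \<notin> Z} \<noteq> {}" unfolding rho_def by (metis card.empty not_one_le_zero)
      then obtain e where e: "e \<in> E" "snd (D e) \<in> Z" "fst (D e) \<notin> Z" by auto
      have "fst (D e) \<in> V" using ends_V[OF G O e(1)] by simp
      then have "(u, fst (D e)) \<in> (arcs E D)\<^sup>*" using e(3) unfolding Z_def by auto
      moreover have "(fst (D e), snd (D e)) \<in> arcs E D" using e(1) unfolding arcs_def by force
      ultimately have "(u, snd (D e)) \<in> (arcs E D)\<^sup>*" by (rule rtrancl_into_rtrancl)
      then show False using e(2) unfolding Z_def by auto
    qed
  qed
qed

lemma rho_sum: "finite E \<Longrightarrow> rho E D Z = (\<Sum>e\<in>E. if snd (D e) \<in> Z \<and> fst (D e) \<notin> Z then 1 else 0)"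
  unfolding rho_def by (simp add: sum.If_cases Int_def)

lemma rho_submod:
  assumes "finite E"
  shows "rho E D (A \<inter> B) + rho E D (A \<union> B) \<le> rho E D A + rho E D B"
  unfolding rho_sum[OF assms] sum.distrib[symmetric]
  by (rule sum_mono) auto

lemma indeg_sum:
  assumes "finite M" "finite E"
  shows "(\<Sum>w\<in>M. indeg E D w) = card {e\<in>E. snd (D e) \<in> M}"
proof -
  have eq: "{e\<in>E. snd (D e) \<in> M} = (\<Union>w\<in>M. {e\<in>E. snd (D e) = w})" by auto
  have "card (\<Union>w\<in>M. {e\<in>E. snd (D e) = w}) = (\<Sum>w\<in>M. card {e\<in>E. snd (D e) = w})"
    using assms by (intro card_UN_disjoint) auto
  then have "card {e\<in>E. snd (D e) \<in> M} = (\<Sum>w\<in>M. card {e\<in>E. snd (D e) = w})"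
    by (simp only: eq)
  then show ?thesis unfolding indeg_def by simp
qed

lemma card_split:
  assumes "finite E"
  shows "card {e\<in>E. P e} = card {e\<in>E. P e \<and> Q e} + card {e\<in>E. P e \<and> \<not> Q e}"
proof -
  have "{e\<in>E. P e} = {e\<in>E. P e \<and> Q e} \<union> {e\<in>E. P e \<and> \<not> Q e}" by auto
  then show ?thesis using assms by (simp add: card_Un_disjoint[symmetric] Int_def)
qed

lemma inside_indep:
  assumes "is_orientation E ep D"
  shows "{e\<in>E. snd (D e) \<in> M \<and> fst (D e) \<in> M} = {e\<in>E. snd (ep e) \<in> M \<and> fst (ep e) \<in> M}"
  using assms unfolding is_orientation_def by (auto simp: prod.swap_def)

lemma indeg_sum_rho:
  assumes G: "ugraph V E ep" and O: "is_orientation E ep D" and M: "finite M"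
  shows "(\<Sum>w\<in>M. indeg E D w) = card {e\<in>E. snd (ep e) \<in> M \<and> fst (ep e) \<in> M} + rho E D M"
proof -
  have fE: "finite E" using G unfolding ugraph_def by simp
  have "(\<Sum>w\<in>M. indeg E D w) = card {e\<in>E. snd (D e) \<in> M}" by (rule indeg_sum[OF M fE])
  also have "\<dots> = card {e\<in>E. snd (D e) \<in> M \<and> fst (D e) \<in> M} + card {e\<in>E. snd (D e) \<in> M \<and> \<not> fst (D e) \<in> M}"
    by (rule card_split[OF fE])
  finally show ?thesis using inside_indep[OF O] unfolding rho_def by simp
qed

lemma sum_le_of_rho:
  assumes G: "ugraph V E ep" and O1: "is_orientation E ep D1" and O2: "is_orientation E ep D2"
    and M: "finite M" and r: "rho E D1 M \<le> rho E D2 M"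
  shows "(\<Sum>w\<in>M. indeg E D1 w) \<le> (\<Sum>w\<in>M. indeg E D2 w)"
  using indeg_sum_rho[OF G O1 M] indeg_sum_rho[OF G O2 M] r by simp

lemma indeg_total:
  assumes G: "ugraph V E ep" and O: "is_orientation E ep D"
  shows "(\<Sum>w\<in>V. indeg E D w) = card E"
proof -
  have fE: "finite E" and fV: "finite V" using G unfolding ugraph_def by auto
  have "{e\<in>E. snd (D e) \<in> V} = E" using ends_V[OF G O] by auto
  then show ?thesis using indeg_sum[OF fV fE] by simp
qed

lemma indeg_outside:
  assumes G: "ugraph V E ep" and O: "is_orientation E ep D" and w: "w \<notin> V"
  shows "indeg E D w = 0"
proof -
  have "{e\<in>E. snd (D e) = w} = {}" using ends_V[OF G O] w by force
  then show ?thesis unfolding indeg_def by (simp only: card.empty)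
qed



fun walk :: "('e \<Rightarrow> 'v \<times> 'v) \<Rightarrow> 'e set \<Rightarrow> 'v \<Rightarrow> 'e list \<Rightarrow> 'v \<Rightarrow> bool" where
  "walk D E a [] b \<longleftrightarrow> a = b"
| "walk D E a (e # es) b \<longleftrightarrow> e \<in> E \<and> fst (D e) = a \<and> walk D E (snd (D e)) es b"

lemma walk_append: "walk D E a (xs @ ys) b \<longleftrightarrow> (\<exists>m. walk D E a xs m \<and> walk D E m ys b)"
  by (induction xs arbitrary: a) auto

lemma rtrancl_walk:
  assumes "(a, b) \<in> (arcs E D)\<^sup>*" shows "\<exists>es. walk D E a es b"
  using assms
proof (induction rule: converse_rtrancl_induct)
  case base
  then show ?case by (metis walk.simps(1))
next
  case (step a c)
  then obtain es where es: "walk D E c es b" by blast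
  from step(1) obtain e where "e \<in> E" "D e = (a, c)" unfolding arcs_def by auto
  then have "walk D E a (e # es) b" using es by simp
  then show ?case by blast
qed

lemma walk_set: "walk D E a es b \<Longrightarrow> set es \<subseteq> E"
  by (induction es arbitrary: a) auto

lemma shortest_distinct:
  assumes w: "walk D E a es b" and m: "\<forall>es'. walk D E a es' b \<longrightarrow> length es \<le> length es'"
  shows "distinct es"
proof (rule ccontr)
  assume "\<not> distinct es"
  then obtain xs ys zs y where es: "es = xs @ [y] @ ys @ [y] @ zs" using not_distinct_decomp by blast
  have "walk D E a (xs @ (y # ys @ y # zs)) b" using w es by simp
  then obtain m where m1: "walk D E a xs m" and m2: "walk D E m (y # (ys @ y # zs)) b"
    unfolding walk_append by blast
  from m2 have y1: "fst (D y) = m" "y \<in> E" and m3: "walk D E (snd (D y)) (ys @ (y # zs)) b" by auto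
  from m3 obtain m' where "walk D E m' (y # zs) b" unfolding walk_append by blast
  then have "fst (D y) = m'" "walk D E (snd (D y)) zs b" by auto
  then have "walk D E m (y # zs) b" using y1 by simp
  then have "walk D E a (xs @ (y # zs)) b" unfolding walk_append using m1 by blast
  moreover have "length (xs @ y # zs) < length es" using es by simp
  ultimately show False using m by (meson not_less)
qed

lemma cnt_cut:
  "walk D E a es b \<Longrightarrow>
    int (length (filter (\<lambda>e. snd (D e) \<in> Z \<and> fst (D e) \<notin> Z) es)) -
    int (length (filter (\<lambda>e. fst (D e) \<in> Z \<and> snd (D e) \<notin> Z) es)) =
    (if b \<in> Z then 1 else 0) - (if a \<in> Z then 1 else 0)"
proof (induction es arbitrary: a)
  case Nil then show ?case by simp
next
  case (Cons e es)
  have p: "e \<in> E" "fst (D e) = a" "walk D E (snd (D e)) es b" using Cons.prems by auto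
  have "int (length (filter (\<lambda>e. snd (D e) \<in> Z \<and> fst (D e) \<notin> Z) es)) -
    int (length (filter (\<lambda>e. fst (D e) \<in> Z \<and> snd (D e) \<notin> Z) es)) =
    (if b \<in> Z then 1 else 0) - (if snd (D e) \<in> Z then 1 else 0)" by (rule Cons.IH[OF p(3)])
  then show ?case using p(2) by auto
qed

lemma cnt_vtx:
  "walk D E a es b \<Longrightarrow>
    int (length (filter (\<lambda>e. fst (D e) = w) es)) - int (length (filter (\<lambda>e. snd (D e) = w) es)) =
    (if w = a then 1 else 0) - (if w = b then 1 else 0)"
proof (induction es arbitrary: a)
  case Nil then show ?case by simp
next
  case (Cons e es)
  have p: "e \<in> E" "fst (D e) = a" "walk D E (snd (D e)) es b" using Cons.prems by auto
  have "int (length (filter (\<lambda>e. fst (D e) = w) es)) - int (length (filter (\<lambda>e. snd (D e) = w) es)) =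
    (if w = snd (D e) then 1 else 0) - (if w = b then 1 else 0)" by (rule Cons.IH[OF p(3)])
  then show ?case using p(2) by auto
qed

lemma card_filter_distinct:
  "distinct es \<Longrightarrow> card {e\<in>set es. P e} = length (filter P es)"
proof -
  assume d: "distinct es"
  have "{e\<in>set es. P e} = {x. P x} \<inter> set es" by auto
  then show ?thesis using distinct_length_filter[OF d, of P] by simp
qed

lemma card_split2:
  assumes "finite E" "P \<subseteq> E"
  shows "card {e\<in>E. Q e} = card {e\<in>E. e \<notin> P \<and> Q e} + card {e\<in>P. Q e}"
proof -
  have 1: "{e\<in>E. Q e} = {e\<in>E. e \<notin> P \<and> Q e} \<union> {e\<in>P. Q e}" using assms(2) by blast
  have f1: "finite {e\<in>P. Q e}" by (rule finite_subset[OF _ assms(1)]) (use assms(2) in blast)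
  have f2: "finite {e\<in>E. e \<notin> P \<and> Q e}" using assms(1) by simp
  have dj: "{e\<in>E. e \<notin> P \<and> Q e} \<inter> {e\<in>P. Q e} = {}" by blast
  show ?thesis by (simp only: 1 card_Un_disjoint[OF f2 f1 dj])
qed

lemma reverse_path:
  assumes G: "ugraph V E ep" and D: "D \<in> strong_orientations V E ep"
    and u: "u \<in> V" and v: "v \<in> V"
    and NT: "\<forall>A. A \<subseteq> V \<longrightarrow> A \<noteq> {} \<longrightarrow> A \<noteq> V \<longrightarrow> rho E D A = 1 \<longrightarrow> u \<in> A \<longrightarrow> v \<in> A"
  shows "\<exists>D'\<in>strong_orientations V E ep. \<forall>w. int (indeg E D' w) =
            int (indeg E D w) - (if w = u then 1 else 0) + (if w = v then 1 else 0)"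
proof -
  have fE: "finite E" using G unfolding ugraph_def by simp
  have O: "is_orientation E ep D" and S: "strongly_connected V E D"
    using D unfolding strong_orientations_def by auto
  have "(v, u) \<in> (arcs E D)\<^sup>*" using S u v unfolding strongly_connected_def by auto
  from rtrancl_walk[OF this] obtain es0 where "walk D E v es0 u" by blast
  then obtain es where w: "walk D E v es u" and mn: "\<forall>es'. walk D E v es' u \<longrightarrow> length es \<le> length es'"
    using ex_has_least_nat[where m = length and P = "\<lambda>es. walk D E v es u"] by blast
  have dist: "distinct es" by (rule shortest_distinct[OF w mn])
  define P where "P = set es"
  have PE: "P \<subseteq> E" unfolding P_def by (rule walk_set[OF w])
  define D' where "D' = (\<lambda>e. if e \<in> P then prod.swap (D e) else D e)"
  have O': "is_orientation E ep D'" using O unfolding is_orientation_def D'_def by auto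
  have deg: "int (indeg E D' w) = int (indeg E D w) - (if w = u then 1 else 0) + (if w = v then 1 else 0)" for w
  proof -
    have s1: "{e\<in>E. e\<notin>P \<and> snd (D' e) = w} = {e\<in>E. e\<notin>P \<and> snd (D e) = w}" by (auto simp: D'_def)
    have s2: "{e\<in>P. snd (D' e) = w} = {e\<in>P. fst (D e) = w}" by (auto simp: D'_def prod.swap_def)
    have a: "indeg E D' w = card {e\<in>E. e \<notin> P \<and> snd (D e) = w} + card {e\<in>P. fst (D e) = w}"
      unfolding indeg_def using card_split2[OF fE PE, of "\<lambda>e. snd (D' e) = w"] s1 s2 by simp
    have b: "indeg E D w = card {e\<in>E. e \<notin> P \<and> snd (D e) = w} + card {e\<in>P. snd (D e) = w}"
      unfolding indeg_def using card_split2[OF fE PE, of "\<lambda>e. snd (D e) = w"] by simp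
    show ?thesis using a b cnt_vtx[OF w, of w] card_filter_distinct[OF dist] unfolding P_def by simp
  qed
  have rh: "int (rho E D' Z) = int (rho E D Z) - (if u \<in> Z then 1 else 0) + (if v \<in> Z then 1 else 0)" for Z
  proof -
    have s1: "{e\<in>E. e\<notin>P \<and> (snd (D' e) \<in> Z \<and> fst (D' e) \<notin> Z)} = {e\<in>E. e\<notin>P \<and> (snd (D e) \<in> Z \<and> fst (D e) \<notin> Z)}" by (auto simp: D'_def)
    have s2: "{e\<in>P. snd (D' e) \<in> Z \<and> fst (D' e) \<notin> Z} = {e\<in>P. fst (D e) \<in> Z \<and> snd (D e) \<notin> Z}" by (auto simp: D'_def prod.swap_def)
    have a: "rho E D' Z = card {e\<in>E. e \<notin> P \<and> (snd (D e) \<in> Z \<and> fst (D e) \<notin> Z)} + card {e\<in>P. fst (D e) \<in> Z \<and> snd (D e) \<notin> Z}"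
      unfolding rho_def using card_split2[OF fE PE, of "\<lambda>e. snd (D' e) \<in> Z \<and> fst (D' e) \<notin> Z"] s1 s2 by simp
    have b: "rho E D Z = card {e\<in>E. e \<notin> P \<and> (snd (D e) \<in> Z \<and> fst (D e) \<notin> Z)} + card {e\<in>P. snd (D e) \<in> Z \<and> fst (D e) \<notin> Z}"
      unfolding rho_def using card_split2[OF fE PE, of "\<lambda>e. snd (D e) \<in> Z \<and> fst (D e) \<notin> Z"] by simp
    show ?thesis using a b cnt_cut[OF w, of Z] card_filter_distinct[OF dist] unfolding P_def by simp
  qed
  have C: "\<forall>Z. Z \<subseteq> V \<longrightarrow> Z \<noteq> {} \<longrightarrow> Z \<noteq> V \<longrightarrow> 1 \<le> rho E D Z"
    using S strong_iff[OF G O] by blast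
  have "\<forall>Z. Z \<subseteq> V \<longrightarrow> Z \<noteq> {} \<longrightarrow> Z \<noteq> V \<longrightarrow> 1 \<le> rho E D' Z"
  proof (intro allI impI)
    fix Z assume Z: "Z \<subseteq> V" "Z \<noteq> {}" "Z \<noteq> V"
    have r1: "1 \<le> rho E D Z" using C Z by blast
    show "1 \<le> rho E D' Z"
    proof (cases "u \<in> Z \<and> v \<notin> Z")
      case True
      then have "rho E D Z \<noteq> 1" using NT Z by blast
      then show ?thesis using rh[of Z] r1 True by simp
    next
      case False
      then show ?thesis using rh[of Z] r1 by (auto split: if_splits)
    qed
  qed
  then have "strongly_connected V E D'" using strong_iff[OF G O'] by blast
  then have "D' \<in> strong_orientations V E ep" using O' unfolding strong_orientations_def by simp
  then show ?thesis using deg by blast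
qed



lemma inter_family:
  assumes "finite F" "\<forall>A\<in>F. \<forall>B\<in>F. A \<inter> B \<in> F" "F \<noteq> {}"
  shows "\<Inter>F \<in> F"
proof -
  have main: "finite G \<Longrightarrow> G \<subseteq> F \<Longrightarrow> G \<noteq> {} \<Longrightarrow> \<Inter>G \<in> F" for G
  proof (induction G rule: finite_induct)
    case empty then show ?case by simp
  next
    case (insert A G)
    show ?case
    proof (cases "G = {}")
      case True then show ?thesis using insert by simp
    next
      case False
      then have "\<Inter>G \<in> F" using insert by blast
      moreover have "A \<in> F" using insert by blast
      ultimately show ?thesis using assms(2) by simp
    qed
  qed
  show ?thesis by (rule main[OF assms(1) _ assms(3)]) simp
qed

lemma ose:
  assumes G: "ugraph V E ep" and D1: "D1 \<in> strong_orientations V E ep"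
    and D2: "D2 \<in> strong_orientations V E ep"
    and gt: "indeg E D2 u < indeg E D1 u"
  shows "\<exists>v\<in>V. indeg E D1 v < indeg E D2 v \<and>
    (\<exists>D'\<in>strong_orientations V E ep. \<forall>w. int (indeg E D' w) =
            int (indeg E D1 w) - (if w = u then 1 else 0) + (if w = v then 1 else 0))"
proof -
  have fE: "finite E" and fV: "finite V" using G unfolding ugraph_def by auto
  have O1: "is_orientation E ep D1" and S1: "strongly_connected V E D1"
    using D1 unfolding strong_orientations_def by auto
  have O2: "is_orientation E ep D2" and S2: "strongly_connected V E D2"
    using D2 unfolding strong_orientations_def by auto
  have C1: "\<And>Z. Z \<subseteq> V \<Longrightarrow> Z \<noteq> {} \<Longrightarrow> Z \<noteq> V \<Longrightarrow> 1 \<le> rho E D1 Z"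
    using S1 strong_iff[OF G O1] by blast
  have C2: "\<And>Z. Z \<subseteq> V \<Longrightarrow> Z \<noteq> {} \<Longrightarrow> Z \<noteq> V \<Longrightarrow> 1 \<le> rho E D2 Z"
    using S2 strong_iff[OF G O2] by blast
  have uV: "u \<in> V" using indeg_outside[OF G O1, of u] gt by (cases "u \<in> V") auto
  define tight where "tight A \<longleftrightarrow> A \<subseteq> V \<and> A \<noteq> {} \<and> A \<noteq> V \<and> rho E D1 A = 1" for A
  define T where "T = {w\<in>V. \<forall>A. tight A \<and> u \<in> A \<longrightarrow> w \<in> A}"
  have inter_closed: "tight (A \<inter> B)"
    if "tight A" "tight B" "u \<in> A" "u \<in> B" "A \<union> B \<noteq> V" for A B
  proof -
    have a1: "A \<inter> B \<subseteq> V" "A \<inter> B \<noteq> {}" "A \<inter> B \<noteq> V" using that unfolding tight_def by auto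
    have a2: "A \<union> B \<subseteq> V" "A \<union> B \<noteq> {}" using that unfolding tight_def by auto
    have "rho E D1 (A \<inter> B) + rho E D1 (A \<union> B) \<le> 2"
      using rho_submod[OF fE, of D1 A B] that unfolding tight_def by simp
    moreover have "1 \<le> rho E D1 (A \<inter> B)" "1 \<le> rho E D1 (A \<union> B)"
      using C1 a1 a2 that(5) by auto
    ultimately have "rho E D1 (A \<inter> B) = 1" by simp
    then show ?thesis using a1 unfolding tight_def by simp
  qed
  define F where "F w = {A. tight A \<and> u \<in> A \<and> w \<notin> A}" for w
  define M where "M w = \<Inter>(F w)" for w
  have MF: "M w \<in> F w" if w: "w \<in> V - T" for w
  proof -
    have "finite (F w)" unfolding F_def tight_def
      by (rule finite_subset[of _ "Pow V"]) (use fV in auto)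
    moreover have "F w \<noteq> {}" using w unfolding T_def F_def by auto
    moreover have "\<forall>A\<in>F w. \<forall>B\<in>F w. A \<inter> B \<in> F w"
    proof (intro ballI)
      fix A B assume A: "A \<in> F w" and B: "B \<in> F w"
      have "A \<union> B \<noteq> V" using A B w unfolding F_def by auto
      then have "tight (A \<inter> B)" using inter_closed A B unfolding F_def by auto
      then show "A \<inter> B \<in> F w" using A B unfolding F_def by auto
    qed
    ultimately show ?thesis unfolding M_def by (intro inter_family) auto
  qed
  have codisj: "M w = M w' \<or> M w \<union> M w' = V" if "w \<in> V - T" "w' \<in> V - T" for w w'
  proof (rule ccontr)
    assume nc: "\<not> (M w = M w' \<or> M w \<union> M w' = V)"
    have m1: "M w \<in> F w" "M w' \<in> F w'" using MF that by auto
    then have t: "tight (M w \<inter> M w')" using inter_closed nc unfolding F_def by auto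
    then have "M w \<inter> M w' \<in> F w" "M w \<inter> M w' \<in> F w'" using m1 unfolding F_def by auto
    then have "M w \<subseteq> M w \<inter> M w'" "M w' \<subseteq> M w \<inter> M w'" unfolding M_def by (auto intro: Inter_lower)
    then show False using nc by auto
  qed
  define Cf where "Cf w = V - M w" for w
  define CC where "CC = Cf ` (V - T)"
  have T_sub_M: "T \<subseteq> M w" if "w \<in> V - T" for w
    using MF[OF that] unfolding T_def F_def by auto
  have UCC: "\<Union>CC = V - T"
  proof
    show "\<Union>CC \<subseteq> V - T" unfolding CC_def Cf_def using T_sub_M by auto
    show "V - T \<subseteq> \<Union>CC"
    proof
      fix w assume w: "w \<in> V - T"
      then have "w \<notin> M w" using MF[OF w] unfolding F_def by auto
      then show "w \<in> \<Union>CC" unfolding CC_def Cf_def using w by auto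
    qed
  qed
  have fCC: "finite CC" unfolding CC_def using fV by simp
  have CCfin: "\<forall>C\<in>CC. finite C" unfolding CC_def Cf_def using fV by auto
  have CCdisj: "\<forall>A\<in>CC. \<forall>B\<in>CC. A \<noteq> B \<longrightarrow> A \<inter> B = {}"
  proof (intro ballI impI)
    fix A B assume A: "A \<in> CC" and B: "B \<in> CC" and ne: "A \<noteq> B"
    obtain w where w: "w \<in> V - T" "A = V - M w" using A unfolding CC_def Cf_def by auto
    obtain w' where w': "w' \<in> V - T" "B = V - M w'" using B unfolding CC_def Cf_def by auto
    have "M w \<noteq> M w'" using ne w w' by auto
    then have "M w \<union> M w' = V" using codisj w w' by blast
    then show "A \<inter> B = {}" using w w' by auto
  qed
  have each: "(\<Sum>x\<in>C. indeg E D2 x) \<le> (\<Sum>x\<in>C. indeg E D1 x)" if C: "C \<in> CC" for C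
  proof -
    obtain w where w: "w \<in> V - T" "C = V - M w" using C unfolding CC_def Cf_def by auto
    have tM: "tight (M w)" using MF[OF w(1)] unfolding F_def by auto
    then have MV: "M w \<subseteq> V" "finite (M w)" unfolding tight_def using fV finite_subset by auto
    have "rho E D1 (M w) \<le> rho E D2 (M w)" using tM C2 unfolding tight_def by auto
    then have le: "(\<Sum>x\<in>M w. indeg E D1 x) \<le> (\<Sum>x\<in>M w. indeg E D2 x)"
      by (rule sum_le_of_rho[OF G O1 O2 MV(2)])
    have s1: "(\<Sum>x\<in>V. indeg E D1 x) = (\<Sum>x\<in>V - M w. indeg E D1 x) + (\<Sum>x\<in>M w. indeg E D1 x)"
      using sum.subset_diff[OF MV(1) fV] by simp
    have s2: "(\<Sum>x\<in>V. indeg E D2 x) = (\<Sum>x\<in>V - M w. indeg E D2 x) + (\<Sum>x\<in>M w. indeg E D2 x)"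
      using sum.subset_diff[OF MV(1) fV] by simp
    show ?thesis unfolding w(2) using s1 s2 le indeg_total[OF G O1] indeg_total[OF G O2] by linarith
  qed
  have "(\<Sum>x\<in>V - T. indeg E D2 x) = (\<Sum>C\<in>CC. \<Sum>x\<in>C. indeg E D2 x)"
    using sum.Union_disjoint[OF CCfin CCdisj] UCC by (simp add: o_def)
  also have "\<dots> \<le> (\<Sum>C\<in>CC. \<Sum>x\<in>C. indeg E D1 x)" using each by (rule sum_mono)
  also have "\<dots> = (\<Sum>x\<in>V - T. indeg E D1 x)"
  proof -
    have "(\<Sum>x\<in>V - T. indeg E D1 x) = (\<Sum>C\<in>CC. \<Sum>x\<in>C. indeg E D1 x)"
      using sum.Union_disjoint[OF CCfin CCdisj] UCC by (simp add: o_def)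
    then show ?thesis by simp
  qed
  finally have compl: "(\<Sum>x\<in>V - T. indeg E D2 x) \<le> (\<Sum>x\<in>V - T. indeg E D1 x)" .
  have TV: "T \<subseteq> V" unfolding T_def by auto
  have fT: "finite T" using TV fV finite_subset by auto
  have t1: "(\<Sum>x\<in>V. indeg E D1 x) = (\<Sum>x\<in>V - T. indeg E D1 x) + (\<Sum>x\<in>T. indeg E D1 x)"
    using sum.subset_diff[OF TV fV] by simp
  have t2: "(\<Sum>x\<in>V. indeg E D2 x) = (\<Sum>x\<in>V - T. indeg E D2 x) + (\<Sum>x\<in>T. indeg E D2 x)"
    using sum.subset_diff[OF TV fV] by simp
  have sumT: "(\<Sum>x\<in>T. indeg E D1 x) \<le> (\<Sum>x\<in>T. indeg E D2 x)"
    using t1 t2 compl indeg_total[OF G O1] indeg_total[OF G O2] by linarith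
  have uT: "u \<in> T" unfolding T_def using uV by auto
  have "\<exists>v\<in>T. indeg E D1 v < indeg E D2 v"
  proof (rule ccontr)
    assume "\<not> (\<exists>v\<in>T. indeg E D1 v < indeg E D2 v)"
    then have "\<forall>v\<in>T. indeg E D2 v \<le> indeg E D1 v" by auto
    then have "(\<Sum>x\<in>T. indeg E D2 x) < (\<Sum>x\<in>T. indeg E D1 x)"
      using sum_strict_mono_ex1[OF fT] uT gt by blast
    then show False using sumT by simp
  qed
  then obtain v where vT: "v \<in> T" and vlt: "indeg E D1 v < indeg E D2 v" by blast
  have vV: "v \<in> V" using vT TV by auto
  have NT: "\<forall>A. A \<subseteq> V \<longrightarrow> A \<noteq> {} \<longrightarrow> A \<noteq> V \<longrightarrow> rho E D1 A = 1 \<longrightarrow> u \<in> A \<longrightarrow> v \<in> A"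
    using vT unfolding T_def tight_def by auto
  show ?thesis using reverse_path[OF G D1 uV vV NT] vV vlt by blast
qed



definition nostep :: "'v set \<Rightarrow> 'e set \<Rightarrow> ('e \<Rightarrow> 'v \<times> 'v) \<Rightarrow> ('e \<Rightarrow> 'v \<times> 'v) \<Rightarrow> bool" where
  "nostep V E ep D \<longleftrightarrow> (\<forall>D'\<in>strong_orientations V E ep. \<forall>a b.
     (\<forall>w. int (indeg E D' w) = int (indeg E D w) - (if w = a then 1 else 0) + (if w = b then 1 else 0))
     \<longrightarrow> indeg E D a \<le> indeg E D b + 1)"

lemma step_strict:
  assumes G: "ugraph V E ep" and D: "D \<in> strong_orientations V E ep"
    and D': "D' \<in> strong_orientations V E ep"
    and f: "\<forall>w. int (indeg E D' w) = int (indeg E D w) - (if w = a then 1 else 0) + (if w = b then 1 else 0)"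
    and gap: "indeg E D b + 2 \<le> indeg E D a"
  shows "(indeg_dec V E D', indeg_dec V E D) \<in> lexord LT \<and> (indeg_inc V E D, indeg_inc V E D') \<in> lexord LT"
proof -
  have fV: "finite V" using G unfolding ugraph_def by simp
  have O: "is_orientation E ep D" using D unfolding strong_orientations_def by simp
  have O': "is_orientation E ep D'" using D' unfolding strong_orientations_def by simp
  have ab: "a \<noteq> b" using gap by auto
  have aV: "a \<in> V" using indeg_outside[OF G O, of a] gap by (cases "a \<in> V") auto
  have bV: "b \<in> V"
  proof (rule ccontr)
    assume "b \<notin> V"
    then show False using f[rule_format, of b] indeg_outside[OF G O, of b] indeg_outside[OF G O', of b] ab by simp
  qed
  have g1: "\<forall>w\<in>V. w \<noteq> b \<longrightarrow> w \<noteq> a \<longrightarrow> indeg E D' w = indeg E D w"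
  proof (intro ballI impI)
    fix w assume "w \<in> V" "w \<noteq> b" "w \<noteq> a"
    then show "indeg E D' w = indeg E D w" using f[rule_format, of w] by simp
  qed
  have g2: "indeg E D' b = indeg E D b + 1" using f[rule_format, of b] ab by simp
  have g3: "indeg E D' a + 1 = indeg E D a" using f[rule_format, of a] ab by simp
  show ?thesis using move_strict[OF fV bV aV ab[symmetric] g1 g2 g3] gap
    unfolding indeg_dec_def indeg_inc_def by simp
qed

lemma ns_dec:
  assumes G: "ugraph V E ep" and dm: "dec_min V E (strong_orientations V E ep) D"
  shows "nostep V E ep D"
  unfolding nostep_def
proof (intro ballI allI impI)
  fix D' a b
  assume D': "D' \<in> strong_orientations V E ep"
    and f: "\<forall>w. int (indeg E D' w) = int (indeg E D w) - (if w = a then 1 else 0) + (if w = b then 1 else 0)"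
  have D: "D \<in> strong_orientations V E ep" using dm unfolding dec_min_def by simp
  show "indeg E D a \<le> indeg E D b + 1"
  proof (rule ccontr)
    assume "\<not> indeg E D a \<le> indeg E D b + 1"
    then have "indeg E D b + 2 \<le> indeg E D a" by simp
    then have "(indeg_dec V E D', indeg_dec V E D) \<in> lexord LT" using step_strict[OF G D D' f] by blast
    moreover have "lex_le (indeg_dec V E D) (indeg_dec V E D')" using dm D' unfolding dec_min_def by blast
    ultimately show False by (rule lex_strict_contra)
  qed
qed

lemma ns_inc:
  assumes G: "ugraph V E ep" and im: "inc_max V E (strong_orientations V E ep) D"
  shows "nostep V E ep D"
  unfolding nostep_def
proof (intro ballI allI impI)
  fix D' a b
  assume D': "D' \<in> strong_orientations V E ep"
    and f: "\<forall>w. int (indeg E D' w) = int (indeg E D w) - (if w = a then 1 else 0) + (if w = b then 1 else 0)"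
  have D: "D \<in> strong_orientations V E ep" using im unfolding inc_max_def by simp
  show "indeg E D a \<le> indeg E D b + 1"
  proof (rule ccontr)
    assume "\<not> indeg E D a \<le> indeg E D b + 1"
    then have "indeg E D b + 2 \<le> indeg E D a" by simp
    then have "(indeg_inc V E D, indeg_inc V E D') \<in> lexord LT" using step_strict[OF G D D' f] by blast
    moreover have "lex_le (indeg_inc V E D') (indeg_inc V E D)" using im D' unfolding inc_max_def by blast
    ultimately show False by (rule lex_strict_contra)
  qed
qed

lemma main:
  assumes G: "ugraph V E ep" and D1: "D1 \<in> strong_orientations V E ep" and NS: "nostep V E ep D1"
  shows "D2 \<in> strong_orientations V E ep \<Longrightarrow>
    lex_le (indeg_dec V E D1) (indeg_dec V E D2) \<and> lex_le (indeg_inc V E D2) (indeg_inc V E D1)"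
proof -
  have fV: "finite V" using G unfolding ugraph_def by simp
  have O1: "is_orientation E ep D1" using D1 unfolding strong_orientations_def by simp
  define dist where "dist D2 = (\<Sum>w\<in>V. (indeg E D1 w - indeg E D2 w) + (indeg E D2 w - indeg E D1 w))" for D2
  have "\<forall>D2. D2 \<in> strong_orientations V E ep \<longrightarrow> dist D2 = n \<longrightarrow>
    lex_le (indeg_dec V E D1) (indeg_dec V E D2) \<and> lex_le (indeg_inc V E D2) (indeg_inc V E D1)" for n
  proof (induction n rule: less_induct)
    case (less n)
    show ?case
    proof (intro allI impI)
      fix D2 assume D2: "D2 \<in> strong_orientations V E ep" and dn: "dist D2 = n"
      have O2: "is_orientation E ep D2" using D2 unfolding strong_orientations_def by simp
      show "lex_le (indeg_dec V E D1) (indeg_dec V E D2) \<and> lex_le (indeg_inc V E D2) (indeg_inc V E D1)"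
      proof (cases "\<forall>w\<in>V. indeg E D2 w = indeg E D1 w")
        case True
        then have "image_mset (indeg E D2) (mset_set V) = image_mset (indeg E D1) (mset_set V)"
          by (intro image_mset_cong) (simp add: fV)
        then have "indeg_inc V E D2 = indeg_inc V E D1" unfolding indeg_inc_def by simp
        then show ?thesis unfolding indeg_dec_def lex_le_def by simp
      next
        case False
        have "\<exists>v0\<in>V. indeg E D1 v0 < indeg E D2 v0"
        proof (rule ccontr)
          assume "\<not> (\<exists>v0\<in>V. indeg E D1 v0 < indeg E D2 v0)"
          then have le: "\<forall>w\<in>V. indeg E D2 w \<le> indeg E D1 w" by auto
          then obtain w0 where "w0 \<in> V" "indeg E D2 w0 < indeg E D1 w0" using False
            by (meson le_neq_implies_less)
          then have "(\<Sum>w\<in>V. indeg E D2 w) < (\<Sum>w\<in>V. indeg E D1 w)"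
            using sum_strict_mono_ex1[OF fV le] by blast
          then show False using indeg_total[OF G O1] indeg_total[OF G O2] by simp
        qed
        define S where "S = {w\<in>V. indeg E D1 w < indeg E D2 w}"
        have fS: "finite S" unfolding S_def using fV by simp
        have neS: "S \<noteq> {}" unfolding S_def using \<open>\<exists>v0\<in>V. _\<close> by auto
        obtain v where vS: "v \<in> S" and vmax: "\<forall>w\<in>S. indeg E D2 w \<le> indeg E D2 v"
        proof -
          have "Max (indeg E D2 ` S) \<in> indeg E D2 ` S" using fS neS by simp
          then obtain v where "v \<in> S" "indeg E D2 v = Max (indeg E D2 ` S)" by auto
          moreover have "\<forall>w\<in>S. indeg E D2 w \<le> Max (indeg E D2 ` S)" using fS by simp
          ultimately show ?thesis using that by metis
        qed
        have vV: "v \<in> V" and vlt: "indeg E D1 v < indeg E D2 v" using vS unfolding S_def by auto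
        obtain u where uV: "u \<in> V" and ult: "indeg E D2 u < indeg E D1 u"
          and "\<exists>D'\<in>strong_orientations V E ep. \<forall>w. int (indeg E D' w) =
            int (indeg E D2 w) - (if w = v then 1 else 0) + (if w = u then 1 else 0)"
          using ose[OF G D2 D1 vlt] by blast
        then obtain D2' where D2': "D2' \<in> strong_orientations V E ep"
          and f: "\<forall>w. int (indeg E D2' w) = int (indeg E D2 w) - (if w = v then 1 else 0) + (if w = u then 1 else 0)"
          by blast
        have uv: "u \<noteq> v" using ult vlt by auto
        have key: "indeg E D2 u + 1 \<le> indeg E D2 v"
        proof (rule ccontr)
          assume "\<not> indeg E D2 u + 1 \<le> indeg E D2 v"
          then have yy: "indeg E D2 v \<le> indeg E D2 u" by simp
          obtain v' where v'V: "v' \<in> V" and v'lt: "indeg E D1 v' < indeg E D2 v'"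
            and "\<exists>D'\<in>strong_orientations V E ep. \<forall>w. int (indeg E D' w) =
              int (indeg E D1 w) - (if w = u then 1 else 0) + (if w = v' then 1 else 0)"
            using ose[OF G D1 D2 ult] by blast
          then have "indeg E D1 u \<le> indeg E D1 v' + 1" using NS unfolding nostep_def by blast
          moreover have "indeg E D2 v' \<le> indeg E D2 v" using vmax v'V v'lt unfolding S_def by auto
          ultimately show False using yy ult v'lt by linarith
        qed
        have g1: "\<forall>w\<in>V. w \<noteq> u \<longrightarrow> w \<noteq> v \<longrightarrow> indeg E D2' w = indeg E D2 w"
        proof (intro ballI impI)
          fix w assume "w \<in> V" "w \<noteq> u" "w \<noteq> v"
          then show "indeg E D2' w = indeg E D2 w" using f[rule_format, of w] by simp
        qed
        have g2: "indeg E D2' u = indeg E D2 u + 1" using f[rule_format, of u] uv by simp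
        have g3: "indeg E D2' v + 1 = indeg E D2 v" using f[rule_format, of v] uv by simp
        have "dist D2' < dist D2" unfolding dist_def
        proof (rule sum_strict_mono_ex1[OF fV])
          show "\<forall>w\<in>V. indeg E D1 w - indeg E D2' w + (indeg E D2' w - indeg E D1 w)
                   \<le> indeg E D1 w - indeg E D2 w + (indeg E D2 w - indeg E D1 w)"
          proof
            fix w assume w: "w \<in> V"
            show "indeg E D1 w - indeg E D2' w + (indeg E D2' w - indeg E D1 w)
                   \<le> indeg E D1 w - indeg E D2 w + (indeg E D2 w - indeg E D1 w)"
            proof (cases "w = u")
              case True then show ?thesis using g2 ult by simp
            next
              case False
              show ?thesis
              proof (cases "w = v")
                case True then show ?thesis using g3 vlt by simp
              next
                case False2: False
                then show ?thesis using g1 w False by simp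
              qed
            qed
          qed
          show "\<exists>w\<in>V. indeg E D1 w - indeg E D2' w + (indeg E D2' w - indeg E D1 w)
                   < indeg E D1 w - indeg E D2 w + (indeg E D2 w - indeg E D1 w)"
            using uV g2 ult by (intro bexI[of _ u]) simp_all
        qed
        then have IH: "lex_le (indeg_dec V E D1) (indeg_dec V E D2') \<and> lex_le (indeg_inc V E D2') (indeg_inc V E D1)"
          using less.IH dn D2' by blast
        have mv: "lex_le (indeg_dec V E D2') (indeg_dec V E D2)" "lex_le (indeg_inc V E D2) (indeg_inc V E D2')"
          using move_le[OF fV uV vV uv g1 g2 g3 key] unfolding indeg_dec_def indeg_inc_def by simp_all
        show ?thesis using IH mv lex_le_trans by blast
      qed
    qed
  qed
  then show "D2 \<in> strong_orientations V E ep \<Longrightarrow> ?thesis" by blast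
qed

theorem corollary6p4:
  fixes V :: "'v set" and E :: "'e set" and ep :: "'e \<Rightarrow> 'v \<times> 'v"
    and D :: "'e \<Rightarrow> 'v \<times> 'v"
  assumes "ugraph V E ep"
    and "strong_orientations V E ep \<noteq> {}"
    and "D \<in> strong_orientations V E ep"
  shows "dec_min V E (strong_orientations V E ep) D \<longleftrightarrow>
         inc_max V E (strong_orientations V E ep) D"
proof
  assume dm: "dec_min V E (strong_orientations V E ep) D"
  have NS: "nostep V E ep D" by (rule ns_dec[OF assms(1) dm])
  show "inc_max V E (strong_orientations V E ep) D"
    unfolding inc_max_def using main[OF assms(1) assms(3) NS] assms(3) by blast
next
  assume im: "inc_max V E (strong_orientations V E ep) D"
  have NS: "nostep V E ep D" by (rule ns_inc[OF assms(1) im])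
  show "dec_min V E (strong_orientations V E ep) D"
    unfolding dec_min_def using main[OF assms(1) assms(3) NS] assms(3) by blast
qed

end
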